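(* Let $n\ge 3$, $k\ge 2$, and let $a,b\ge 2$ be integers with $a+b=k+1$. Let $G$ be a spanning subgraph of $CT_n$ containing no cycle of length $4k+2$. If $C$ is a cycle of length $4a$ in $G$ and $C'$ is a cycle of length $4b$ in $G$, and $C$ and $C'$ have at least one common edge, then $|\mathrm{supp}(C)\cap\mathrm{supp}(C')|\ge 3$.
   Context: $\mathrm{S}_n$ is the symmetric group on $\{1,\dots,n\}$; $\mathrm{supp}(x)=\{i:i^x\ne i\}$. $CT_n$ has vertex set $\mathrm{S}_n$, with $\{x,y\}$ an edge iff $yx^{-1}$ is a transposition. The support of an edge $\{u,z\}$ is $\mathrm{supp}(\{u,z\})=\mathrm{supp}(zu^{-1})$, and for a subgraph $H$ of $CT_n$, $\mathrm{supp}(H)=\bigcup_{\{u,z\}\in E(H)}\mathrm{supp}(\{u,z\})$. *)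

theory Defs
  imports "HOL-Combinatorics.Combinatorics"
begin

text \<open>Permutations of {1..n} are functions nat => nat; i^x is written x i (right action).
  Hence the product y x^{-1} (first y, then x^{-1}) is the function inv x o y.\<close>

definition Sym :: "nat \<Rightarrow> (nat \<Rightarrow> nat) set" where
  "Sym n = {p. p permutes {1..n}}"

definition supp :: "(nat \<Rightarrow> nat) \<Rightarrow> nat set" where
  "supp x = {i. x i \<noteq> i}"

definition is_transposition :: "(nat \<Rightarrow> nat) \<Rightarrow> bool" where
  "is_transposition t \<longleftrightarrow> (\<exists>i j. i \<noteq> j \<and> t = transpose i j)"

definition CT_edges :: "nat \<Rightarrow> (nat \<Rightarrow> nat) set set" where
  "CT_edges n = {{x, y} | x y. x \<in> Sym n \<and> y \<in> Sym n \<and> is_transposition (inv x \<circ> y)}"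

definition supp_edges :: "(nat \<Rightarrow> nat) set set \<Rightarrow> nat set" where
  "supp_edges F = \<Union>{supp (inv u \<circ> z) | u z. {u, z} \<in> F}"

definition cycle_edges :: "'v list \<Rightarrow> 'v set set" where
  "cycle_edges vs = {{vs ! i, vs ! ((i + 1) mod length vs)} | i. i < length vs}"

definition cycle_in :: "'v set set \<Rightarrow> 'v list \<Rightarrow> bool" where
  "cycle_in E vs \<longleftrightarrow> length vs \<ge> 3 \<and> distinct vs \<and> cycle_edges vs \<subseteq> E"

end

theory Submission
  imports Defs
begin

fun path :: "'v set set \<Rightarrow> 'v list \<Rightarrow> bool" where
  "path E (x # y # xs) = ({x, y} \<in> E \<and> path E (y # xs))"
| "path E _ = True"

lemma all_nat_split: "(\<forall>i::nat. P i) \<longleftrightarrow> P 0 \<and> (\<forall>i. P (Suc i))"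
  by (metis not0_implies_Suc)

lemma path_nth: "path E xs \<longleftrightarrow> (\<forall>i. Suc i < length xs \<longrightarrow> {xs ! i, xs ! Suc i} \<in> E)"
proof (induction E xs rule: path.induct)
  case (1 E x y xs)
  show ?case
    by (subst all_nat_split) (simp add: 1)
next
  case ("2_1" E)
  then show ?case by simp
next
  case ("2_2" E v)
  then show ?case by simp
qed

lemma path_append: "path E (xs @ y # ys) \<longleftrightarrow> path E (xs @ [y]) \<and> path E (y # ys)"
proof (induction xs)
  case Nil
  then show ?case by simp
next
  case (Cons x xs)
  then show ?case by (cases xs) auto
qed

lemma path_rev: "path E (rev xs) \<longleftrightarrow> path E xs"
proof (induction xs)
  case Nil
  then show ?case by simp
next
  case (Cons x xs)
  show ?case
  proof (cases xs)
    case Nil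
    then show ?thesis by simp
  next
    case (Cons y ys)
    have "rev (x # xs) = rev ys @ y # [x]" using Cons by simp
    then have "path E (rev (x # xs)) \<longleftrightarrow> path E (rev xs) \<and> {y, x} \<in> E"
      using Cons path_append[of E "rev ys" y "[x]"] by simp
    then show ?thesis using Cons \<open>path E (rev xs) = path E xs\<close> by (auto simp: insert_commute)
  qed
qed

lemma path_cycle:
  assumes "vs \<noteq> []" "path E (vs @ [hd vs])"
  shows "cycle_edges vs \<subseteq> E"
proof
  fix e assume "e \<in> cycle_edges vs"
  then obtain i where i: "i < length vs" "e = {vs ! i, vs ! ((i + 1) mod length vs)}"
    unfolding cycle_edges_def by blast
  have E: "{(vs @ [hd vs]) ! i, (vs @ [hd vs]) ! Suc i} \<in> E"
    using assms(2) i(1) unfolding path_nth by simp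
  show "e \<in> E"
  proof (cases "Suc i < length vs")
    case True
    then show ?thesis using E i by (simp add: nth_append)
  next
    case False
    then have "Suc i = length vs" using i by simp
    then show ?thesis using E i assms(1) by (simp add: nth_append hd_conv_nth)
  qed
qed

lemma rot:
  assumes "cycle_edges C \<subseteq> E" "p < length C"
  shows "path E (rotate (Suc p) C)" "hd (rotate (Suc p) C) = C ! ((p+1) mod length C)"
    "last (rotate (Suc p) C) = C ! p"
proof -
  let ?L = "length C"
  have ne: "C \<noteq> []" using assms by auto
  show "path E (rotate (Suc p) C)"
    unfolding path_nth
  proof (intro allI impI)
    fix i assume "Suc i < length (rotate (Suc p) C)"
    then have i: "Suc i < ?L" by simp
    define m where "m = (i + Suc p) mod ?L"
    have m: "m < ?L" using ne m_def by simp
    have "{C ! m, C ! ((m + 1) mod ?L)} \<in> cycle_edges C"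
      unfolding cycle_edges_def using m by blast
    moreover have "(m + 1) mod ?L = (Suc i + Suc p) mod ?L"
      unfolding m_def by (simp add: mod_Suc_eq)
    moreover have "rotate (Suc p) C ! i = C ! m"
      using nth_rotate[of i C "Suc p"] i unfolding m_def by (simp add: add.commute)
    moreover have "rotate (Suc p) C ! Suc i = C ! ((Suc i + Suc p) mod ?L)"
      using nth_rotate[of "Suc i" C "Suc p"] i by (simp add: add.commute)
    ultimately show "{rotate (Suc p) C ! i, rotate (Suc p) C ! Suc i} \<in> E"
      using assms(1) by auto
  qed
  show "hd (rotate (Suc p) C) = C ! ((p+1) mod length C)"
    using ne nth_rotate[of 0 C "Suc p"] by (simp add: hd_conv_nth del: rotate_Suc)
  have "(?L - 1 + Suc p) mod ?L = p" using assms(2) ne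
    by (metis Suc_diff_1 add_Suc_shift length_greater_0_conv mod_add_self1 mod_less)
  then show "last (rotate (Suc p) C) = C ! p"
    using ne nth_rotate[of "?L - 1" C "Suc p"] by (simp add: last_conv_nth add.commute del: rotate_Suc)
qed

lemma edge_agree:
  assumes "F \<subseteq> CT_edges n" "{u, z} \<in> F" "t \<notin> supp_edges F"
  shows "u t = z t"
proof -
  have "{u, z} \<in> CT_edges n" using assms by blast
  then obtain x y where xy: "{u, z} = {x, y}" "x \<in> Sym n" "y \<in> Sym n"
    unfolding CT_edges_def by blast
  have up: "u permutes {1..n}" using xy unfolding Sym_def by (metis doubleton_eq_iff mem_Collect_eq)
  have "supp (inv u \<circ> z) \<subseteq> supp_edges F" unfolding supp_edges_def using assms(2) by blast
  then have "inv u (z t) = t" using assms(3) unfolding supp_def by auto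
  then have "u (inv u (z t)) = u t" by simp
  then show ?thesis using permutes_inverses(1)[OF up] by simp
qed

lemma agree:
  assumes "cycle_edges vs \<subseteq> CT_edges n" "v \<in> set vs" "w \<in> set vs"
    "t \<notin> supp_edges (cycle_edges vs)"
  shows "v t = w t"
proof -
  have all: "\<forall>m. m < length vs \<longrightarrow> (vs ! m) t = (vs ! 0) t"
  proof
    fix m show "m < length vs \<longrightarrow> (vs ! m) t = (vs ! 0) t"
    proof (induction m)
      case 0 then show ?case by simp
    next
      case (Suc m)
      show ?case
      proof
        assume sm: "Suc m < length vs"
        then have "(m + 1) mod length vs = Suc m" by simp
        then have "{vs ! m, vs ! Suc m} \<in> cycle_edges vs"
          unfolding cycle_edges_def using sm by (metis (mono_tags, lifting) Suc_lessD mem_Collect_eq)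
        then have "(vs ! m) t = (vs ! Suc m) t" using edge_agree assms(1,4) by metis
        then show "(vs ! Suc m) t = (vs ! 0) t" using Suc sm by simp
      qed
    qed
  qed
  obtain p q where "p < length vs" "v = vs ! p" "q < length vs" "w = vs ! q"
    using assms(2,3) by (metis in_set_conv_nth)
  then show ?thesis using all by metis
qed

lemma two:
  assumes "bij (w::nat \<Rightarrow> nat)" "bij x" "i \<noteq> j" "\<And>t. t \<notin> {i, j} \<Longrightarrow> w t = x t"
  shows "w = x \<or> w = x \<circ> transpose i j"
proof -
  have inj: "inj w" using assms(1) bij_is_inj by blast
  have sx: "surj x" using assms(2) bij_is_surj by blast
  have wi: "w i = x i \<or> w i = x j"
  proof -
    obtain s where s: "w i = x s" using sx by (metis surjD)
    show ?thesis
    proof (cases "s \<in> {i, j}")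
      case True then show ?thesis using s by auto
    next
      case False
      then have "w s = x s" using assms(4) by blast
      then have "s = i" using s inj by (metis injD)
      then show ?thesis using False by simp
    qed
  qed
  have wj: "w j = x i \<or> w j = x j"
  proof -
    obtain s where s: "w j = x s" using sx by (metis surjD)
    show ?thesis
    proof (cases "s \<in> {i, j}")
      case True then show ?thesis using s by auto
    next
      case False
      then have "w s = x s" using assms(4) by blast
      then have "s = j" using s inj by (metis injD)
      then show ?thesis using False by simp
    qed
  qed
  have ne: "w i \<noteq> w j" using inj assms(3) by (metis injD)
  show ?thesis
  proof (cases "w i = x i")
    case True
    then have "w j = x j" using wj ne by auto
    then have "w = x" using True assms(4) by (metis insertE empty_iff ext)
    then show ?thesis by simp
  next
    case False
    then have a: "w i = x j" using wi by simp
    then have b: "w j = x i" using wj ne by auto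
    have "w = x \<circ> transpose i j"
    proof
      fix t show "w t = (x \<circ> transpose i j) t"
        using a b assms(4)[of t] assms(3) by (auto simp: transpose_def)
    qed
    then show ?thesis by simp
  qed
qed

lemma supp_sub:
  assumes "F \<subseteq> CT_edges n"
  shows "supp_edges F \<subseteq> {1..n}"
proof
  fix t assume "t \<in> supp_edges F"
  then obtain u z where uz: "{u, z} \<in> F" "t \<in> supp (inv u \<circ> z)"
    unfolding supp_edges_def by blast
  have "{u, z} \<in> CT_edges n" using assms uz by blast
  then obtain x y where xy: "{u, z} = {x, y}" "x \<in> Sym n" "y \<in> Sym n"
    unfolding CT_edges_def by blast
  have up: "u permutes {1..n}" "z permutes {1..n}" using xy unfolding Sym_def
    by (metis doubleton_eq_iff mem_Collect_eq)+
  show "t \<in> {1..n}"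
  proof (rule ccontr)
    assume "t \<notin> {1..n}"
    then have "z t = t" "inv u t = t" using permutes_not_in up permutes_inv by metis+
    then show False using uz(2) unfolding supp_def by simp
  qed
qed

lemma glue:
  assumes "path E A" "path E B" "distinct A" "distinct B" "length A \<ge> 2" "length B \<ge> 2"
    "hd B = last A" "last B = hd A" "set A \<inter> set B \<subseteq> {hd A, last A}"
  shows "cycle_edges (A @ butlast (tl B)) \<subseteq> E" "distinct (A @ butlast (tl B))"
    "length (A @ butlast (tl B)) = length A + length B - 2"
proof -
  have An: "A \<noteq> []" and Bn: "B \<noteq> []" and Btn: "tl B \<noteq> []" using assms(5,6)
    by (auto simp: tl_Nil)
  have tlB: "butlast (tl B) @ [hd A] = tl B"
    using append_butlast_last_id[OF Btn] last_tl[of B] Btn assms(8) by simp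
  have B: "B = last A # tl B" using Bn assms(7) by (metis list.collapse)
  have "A @ tl B = butlast A @ last A # tl B"
    using append_butlast_last_id[OF An] by (metis append.assoc append_Cons append_Nil)
  moreover have "path E (butlast A @ [last A])" using append_butlast_last_id[OF An] assms(1) by simp
  moreover have "path E (last A # tl B)" using B assms(2) by simp
  ultimately have "path E (A @ tl B)" using path_append by metis
  then have "path E ((A @ butlast (tl B)) @ [hd (A @ butlast (tl B))])"
    using tlB An by simp
  then show "cycle_edges (A @ butlast (tl B)) \<subseteq> E" using path_cycle An by blast
  have dtl: "distinct (tl B)" using assms(4) by (simp add: distinct_tl)
  have "distinct (butlast (tl B))" using dtl distinct_butlast by blast
  moreover have "set A \<inter> set (butlast (tl B)) = {}"
  proof (rule ccontr)
    assume "set A \<inter> set (butlast (tl B)) \<noteq> {}"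
    then obtain w where w: "w \<in> set A" "w \<in> set (butlast (tl B))" by blast
    then have wt: "w \<in> set (tl B)" by (meson in_set_butlastD)
    then have "w \<in> set B" by (meson list.set_sel(2) Bn)
    then have "w = hd A \<or> w = last A" using w assms(9) by blast
    moreover have "w \<noteq> last A" using B assms(4) wt by (metis distinct.simps(2))
    moreover have "w \<noteq> hd A"
    proof
      assume "w = hd A"
      then have "w = last (tl B)" using last_tl[of B] Btn assms(8) by simp
      then show False using w(2) dtl append_butlast_last_id[OF Btn]
        by (metis distinct_append disjoint_iff list.set_intros(1))
    qed
    ultimately show False by blast
  qed
  ultimately show "distinct (A @ butlast (tl B))" using assms(3) by simp
  show "length (A @ butlast (tl B)) = length A + length B - 2" using assms(6) by simp
qed

theorem lemma3p2:
  fixes n k a b :: nat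
    and E :: "(nat \<Rightarrow> nat) set set"
    and C C' :: "(nat \<Rightarrow> nat) list"
  assumes "n \<ge> 3" "k \<ge> 2" "a \<ge> 2" "b \<ge> 2" "a + b = k + 1"
    and "E \<subseteq> CT_edges n"
    and "\<not> (\<exists>vs. cycle_in E vs \<and> length vs = 4 * k + 2)"
    and "cycle_in E C" "length C = 4 * a"
    and "cycle_in E C'" "length C' = 4 * b"
    and "cycle_edges C \<inter> cycle_edges C' \<noteq> {}"
  shows "card (supp_edges (cycle_edges C) \<inter> supp_edges (cycle_edges C')) \<ge> 3"
proof (rule ccontr)
  assume card: "\<not> ?thesis"
  let ?S = "supp_edges (cycle_edges C)" and ?S' = "supp_edges (cycle_edges C')"
  have cE: "cycle_edges C \<subseteq> E" and cE': "cycle_edges C' \<subseteq> E" and dC: "distinct C" and dC': "distinct C'"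
    using assms(8,10) unfolding cycle_in_def by auto
  have cT: "cycle_edges C \<subseteq> CT_edges n" and cT': "cycle_edges C' \<subseteq> CT_edges n"
    using cE cE' assms(6) by auto
  obtain e where e: "e \<in> cycle_edges C" "e \<in> cycle_edges C'" using assms(12) by blast
  obtain p where p: "p < length C" "e = {C ! p, C ! ((p + 1) mod length C)}"
    using e(1) unfolding cycle_edges_def by blast
  obtain q where q: "q < length C'" "e = {C' ! q, C' ! ((q + 1) mod length C')}"
    using e(2) unfolding cycle_edges_def by blast
  have "e \<in> CT_edges n" using e cT by blast
  then obtain x y where xy: "e = {x, y}" "x \<in> Sym n" "y \<in> Sym n" "is_transposition (inv x \<circ> y)"
    unfolding CT_edges_def by blast
  then obtain i j where ij: "i \<noteq> j" "inv x \<circ> y = transpose i j"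
    unfolding is_transposition_def by blast
  have xp: "x permutes {1..n}" "y permutes {1..n}" using xy unfolding Sym_def by auto
  have suppt: "supp (inv x \<circ> y) = {i, j}" using ij unfolding supp_def
    by (auto simp: transpose_def)
  have "{i, j} \<subseteq> ?S" using suppt e(1) xy(1) unfolding supp_edges_def by blast
  moreover have "{i, j} \<subseteq> ?S'" using suppt e(2) xy(1) unfolding supp_edges_def by blast
  ultimately have sub: "{i, j} \<subseteq> ?S \<inter> ?S'" by blast
  have fin: "finite (?S \<inter> ?S')" using supp_sub[OF cT] by (meson finite_Int finite_atLeastAtMost finite_subset)
  have "card {i, j} = 2" using ij by simp
  then have "card (?S \<inter> ?S') \<ge> 2" using card_mono[OF fin sub] by simp
  then have "card {i, j} = card (?S \<inter> ?S')" using card \<open>card {i, j} = 2\<close> by simp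
  then have SS: "?S \<inter> ?S' = {i, j}" using card_subset_eq[OF fin sub] by simp
  have yx: "y = x \<circ> transpose i j"
    using ij(2) permutes_inv_o(1)[OF xp(1)] by (metis comp_assoc comp_id id_comp)
  have eC: "e \<subseteq> set C" proof -
    have "Suc p mod length C < length C" by (rule mod_less_divisor) (use p(1) in linarith)
    then show ?thesis using p by auto
  qed
  have eC': "e \<subseteq> set C'" proof -
    have "Suc q mod length C' < length C'" by (rule mod_less_divisor) (use q(1) in linarith)
    then show ?thesis using q by auto
  qed
  have common: "set C \<inter> set C' \<subseteq> e"
  proof
    fix w assume w: "w \<in> set C \<inter> set C'"
    have "w \<in> Sym n"
    proof -
      obtain r where r: "r < length C" "C ! r = w" using w by (meson IntD1 in_set_conv_nth)
      have "{C ! r, C ! ((r + 1) mod length C)} \<in> cycle_edges C"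
        unfolding cycle_edges_def using r(1) by blast
      then have "{w, C ! ((r + 1) mod length C)} \<in> CT_edges n" using cT r(2) by blast
      then obtain x' y' where "{w, C ! ((r + 1) mod length C)} = {x', y'}" "x' \<in> Sym n" "y' \<in> Sym n"
        unfolding CT_edges_def by blast
      then show ?thesis by (metis doubleton_eq_iff)
    qed
    then have wp: "w permutes {1..n}" unfolding Sym_def by simp
    have "\<And>t. t \<notin> {i, j} \<Longrightarrow> w t = x t"
    proof -
      fix t assume "t \<notin> {i, j}"
      then have "t \<notin> ?S \<or> t \<notin> ?S'" using SS by blast
      then show "w t = x t"
      proof
        assume "t \<notin> ?S" then show ?thesis using agree[OF cT] w eC xy(1) by blast
      next
        assume "t \<notin> ?S'" then show ?thesis using agree[OF cT'] w eC' xy(1) by blast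
      qed
    qed
    then have "w = x \<or> w = x \<circ> transpose i j"
      using two[OF permutes_bij[OF wp] permutes_bij[OF xp(1)] ij(1)] by blast
    then show "w \<in> e" using yx xy(1) by blast
  qed
  define A where "A = rotate (Suc p) C"
  define B where "B = rotate (Suc q) C'"
  have A: "path E A" "hd A = C ! ((p+1) mod length C)" "last A = C ! p"
    using rot[OF cE p(1)] unfolding A_def by auto
  have B: "path E B" "hd B = C' ! ((q+1) mod length C')" "last B = C' ! q"
    using rot[OF cE' q(1)] unfolding B_def by auto
  have eA: "e = {hd A, last A}" using A p(2) by auto
  have eB: "e = {hd B, last B}" using B q(2) by auto
  have lA: "length A = 4 * a" "distinct A" "set A = set C" using assms(9) dC unfolding A_def by auto
  have lB: "length B = 4 * b" "distinct B" "set B = set C'" using assms(11) dC' unfolding B_def by auto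
  have hlA: "hd A \<noteq> last A"
  proof -
    have "A \<noteq> []" using lA assms(3) by auto
    then have "hd A = A ! 0" "last A = A ! (length A - 1)" by (auto simp: hd_conv_nth last_conv_nth)
    moreover have "length A - 1 \<noteq> 0" "length A - 1 < length A" using lA assms(3) by auto
    ultimately show ?thesis using lA(2) nth_eq_iff_index_eq by (metis length_greater_0_conv less_nat_zero_code neq0_conv)
  qed
  obtain B' where B': "path E B'" "distinct B'" "length B' = 4 * b" "set B' = set C'"
    "hd B' = last A" "last B' = hd A"
  proof (cases "hd B = last A")
    case True
    then have "last B = hd A" using eA eB hlA by (auto simp: doubleton_eq_iff)
    then show ?thesis using that[of B] lB B True by auto
  next
    case False
    then have h: "hd B = hd A" "last B = last A" using eA eB hlA by (auto simp: doubleton_eq_iff)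
    have Bn: "B \<noteq> []" using lB assms(4) by auto
    show ?thesis using that[of "rev B"] lB B h Bn path_rev by (auto simp: hd_rev last_rev)
  qed
  have "set A \<inter> set B' \<subseteq> {hd A, last A}" using common lA B' eA by auto
  from glue[OF A(1) B'(1) lA(2) B'(2) _ _ B'(5) B'(6) this]
  have g: "cycle_edges (A @ butlast (tl B')) \<subseteq> E" "distinct (A @ butlast (tl B'))"
    "length (A @ butlast (tl B')) = 4 * a + 4 * b - 2"
    using lA B' assms(3,4) by auto
  have "length (A @ butlast (tl B')) = 4 * k + 2" using g(3) assms(5) by simp
  moreover have "cycle_in E (A @ butlast (tl B'))"
    using g calculation assms(2) unfolding cycle_in_def by simp
  ultimately show False using assms(7) by blast
qed

end
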